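(* For any $\beta,c\ge0$, $N\in\mathbb N$ and $\mathfrak L\in\mathcal S^*$, the limits $$\widetilde G^{(1)}_N(\beta,c,\mathfrak L)=\lim_{R\to\infty}G^{(1)}_{N,R}(\beta,c,\mathfrak L)\quad\text{and}\quad\widetilde G^{(2)}_N(\beta,c,\mathfrak L)=\lim_{R\to\infty}G^{(2)}_{N,R}(\beta,c,\mathfrak L)$$ exist, and $\widetilde G^{(1)}_N(\beta,c,\cdot)$, $\widetilde G^{(2)}_N(\beta,c,\cdot)$ are continuous functions on $\mathcal S^*$ (with the topology of weak convergence).
   Context: Fix an integer $q\ge2$, $[q]=\{1,\dots,q\}$, $\pi_\lambda$ the Poisson($\lambda$) mass function. $[q]^{\mathbb N\times\mathbb N}$ is the (compact, product topology) set of $\mathcal T=(\tau^{(1)},\tau^{(2)},\dots)$ with each $\tau^{(r)}=(\tau^{(r)}_1,\tau^{(r)}_2,\dots)\in[q]^{\mathbb N}$. $\mathcal S^*$ is the set of Borel probability measures $\mathfrak L$ on $[q]^{\mathbb N\times\mathbb N}$ such that for every bijection $\pi$ of $\mathbb N$ moving finitely many points, (i) the law of $(\tau^{(1)}\circ\pi,\tau^{(2)}\circ\pi,\dots)$ equals $\mathfrak L$, where $(\tau\circ\pi)_n=\tau_{\pi(n)}$, and (ii) the law of $(\tau^{(\pi(1))},\tau^{(\pi(2))},\dots)$ equals $\mathfrak L$. Let $\boldsymbol I$ be random, independent of $\mathcal T$, with $|\boldsymbol I|\sim\pi_{cN}$ and, given $|\boldsymbol I|=k$, $I_1,\dots,I_k$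 i.i.d. uniform on $\{1,\dots,N\}$ (expectation $\widetilde{\mathbb E}_{N,c}$); $\widetilde H_N(\boldsymbol I,\tau,\sigma)=\sum_{i=1}^{|\boldsymbol I|}\delta(\tau_i,\sigma_{I_i})$ for $\sigma\in[q]^N$. For $R\in\mathbb N$: $$G^{(1)}_{N,R}(\beta,c,\mathfrak L)=\int\widetilde{\mathbb E}_{N,c}\Big[\frac1N\ln\sum_{r=1}^R\frac1R\sum_{\sigma\in[q]^N}e^{-\beta\widetilde H_N(\boldsymbol I,\tau^{(r)},\sigma)}\Big]d\mathfrak L(\mathcal T),$$ $$G^{(2)}_{N,R}(\beta,c,\mathfrak L)=\int\sum_{K=0}^\infty\frac{\pi_{cN/2}(K)}{N}\ln\Big(\sum_{r=1}^R\frac1R\exp\Big(-\beta\sum_{k=1}^K\delta(\tau^{(r)}_{2k-1},\tau^{(r)}_{2k})\Big)\Big)d\mathfrak L(\mathcal T).$$ *)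

theory Defs
  imports "HOL-Probability.Probability"
begin

text \<open>Configurations: \<T> is the function T with T r n = \<tau>^(r)_n (rows r, columns n,
  both indexed by nat = {0,1,2,...}, a relabelling of the paper's index set).
  The space [q]^(N x N) is the subset Qcfg q of the product space nat => nat => nat
  (product topology of discrete nat), which carries the subspace = product topology.\<close>

type_synonym cfg = "nat \<Rightarrow> nat \<Rightarrow> nat"

definition Qcfg :: "nat \<Rightarrow> cfg set" where
  "Qcfg q = {T. \<forall>r n. T r n \<in> {1..q}}"

definition prob_on_Q :: "nat \<Rightarrow> cfg measure \<Rightarrow> bool" where
  "prob_on_Q q L \<longleftrightarrow> prob_space L \<and> sets L = sets (restrict_space borel (Qcfg q))"

definition finitary_perm :: "(nat \<Rightarrow> nat) \<Rightarrow> bool" where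
  "finitary_perm \<pi> \<longleftrightarrow> bij \<pi> \<and> finite {n. \<pi> n \<noteq> n}"

definition Sstar :: "nat \<Rightarrow> cfg measure set" where
  "Sstar q = {L. prob_on_Q q L \<and>
     (\<forall>\<pi>. finitary_perm \<pi> \<longrightarrow>
        distr L L (\<lambda>T r n. T r (\<pi> n)) = L \<and> distr L L (\<lambda>T r. T (\<pi> r)) = L)}"

definition weak_topology :: "nat \<Rightarrow> cfg measure topology" where
  "weak_topology q = topology_generated_by
     {{L. (\<integral>T. f T \<partial>L) \<in> U} | f U.
        continuous_on (Qcfg q) f \<and> bounded (f ` Qcfg q) \<and> open (U :: real set)}"

definition poisson :: "real \<Rightarrow> nat \<Rightarrow> real" where
  "poisson m k = exp (- m) * m ^ k / fact k"

definition kdelta :: "nat \<Rightarrow> nat \<Rightarrow> real" where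
  "kdelta a b = (if a = b then 1 else 0)"

text \<open>H_N(I,\<tau>,\<sigma>) with |I| = k, I given as a function on {..<k} with values in {1..N},
  \<tau> indexed from 0 (\<tau>_i of the paper is \<tau> (i-1)), \<sigma> : {1..N} \<rightarrow> [q].\<close>
definition Hamil :: "nat \<Rightarrow> (nat \<Rightarrow> nat) \<Rightarrow> (nat \<Rightarrow> nat) \<Rightarrow> (nat \<Rightarrow> nat) \<Rightarrow> real" where
  "Hamil k I \<tau> \<sigma> = (\<Sum>i<k. kdelta (\<tau> i) (\<sigma> (I i)))"

text \<open>G^(1)_{N,R}: the expectation over I is \<Sum>_k \<pi>_{cN}(k) N^{-k} \<Sum>_{I \<in> [N]^k}.\<close>
definition G1 :: "nat \<Rightarrow> nat \<Rightarrow> nat \<Rightarrow> real \<Rightarrow> real \<Rightarrow> cfg measure \<Rightarrow> real" where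
  "G1 q N R \<beta> c L = (\<integral>T. (\<Sum>k. poisson (c * real N) k * (1 / real N ^ k) *
      (\<Sum>I \<in> PiE {..<k} (\<lambda>_. {1..N}).
         (1 / real N) * ln (\<Sum>r<R. (1 / real R) *
            (\<Sum>\<sigma> \<in> PiE {1..N} (\<lambda>_. {1..q}). exp (- \<beta> * Hamil k I (T r) \<sigma>))))) \<partial>L)"

text \<open>G^(2)_{N,R}; the pairs (\<tau>_{2k-1},\<tau>_{2k}), k=1..K, become (T r (2k), T r (2k+1)), k<K.\<close>
definition G2 :: "nat \<Rightarrow> nat \<Rightarrow> real \<Rightarrow> real \<Rightarrow> cfg measure \<Rightarrow> real" where
  "G2 N R \<beta> c L = (\<integral>T. (\<Sum>K. poisson (c * real N / 2) K / real N *
      ln (\<Sum>r<R. (1 / real R) *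
            exp (- \<beta> * (\<Sum>k<K. kdelta (T r (2 * k)) (T r (2 * k + 1)))))) \<partial>L)"

end

theory Submission
  imports Defs
begin


lemma Sstar_prob: "L \<in> Sstar q \<Longrightarrow> prob_space L"
  by (simp add: Sstar_def prob_on_Q_def)

lemma Sstar_sets: "L \<in> Sstar q \<Longrightarrow> sets L = sets (restrict_space borel (Qcfg q))"
  by (simp add: Sstar_def prob_on_Q_def)

lemma Sstar_meas:
  fixes F :: "cfg \<Rightarrow> real"
  assumes "F \<in> borel_measurable borel" "L \<in> Sstar q"
  shows "F \<in> borel_measurable L"
proof -
  have "F \<in> borel_measurable (restrict_space borel (Qcfg q))"
    using assms(1) by (rule measurable_restrict_space1)
  then show ?thesis
    using measurable_cong_sets[OF Sstar_sets[OF assms(2)] refl] by blast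
qed

lemma finitary_transpose: "finitary_perm (Transposition.transpose a b)"
proof -
  have "{n. Transposition.transpose a b n \<noteq> n} \<subseteq> {a, b}"
    by (auto simp: Transposition.transpose_def split: if_splits)
  then show ?thesis unfolding finitary_perm_def
    by (auto intro: finite_subset)
qed

lemma finitary_comp:
  assumes "finitary_perm f" "finitary_perm g"
  shows "finitary_perm (f \<circ> g)"
proof -
  have "{n. (f \<circ> g) n \<noteq> n} \<subseteq> {n. f n \<noteq> n} \<union> {n. g n \<noteq> n}"
    by auto
  then show ?thesis using assms unfolding finitary_perm_def
    by (auto intro: finite_subset bij_comp)
qed

lemma cont_rowperm: "continuous_on UNIV (\<lambda>(T::cfg) r. T (\<pi> r))"
  by (intro continuous_on_coordinatewise_then_product continuous_on_product_coordinates)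

lemma exch:
  fixes F :: "cfg \<Rightarrow> real"
  assumes L: "L \<in> Sstar q" and \<pi>: "finitary_perm \<pi>" and F: "F \<in> borel_measurable borel"
  shows "(\<integral>T. F (\<lambda>r. T (\<pi> r)) \<partial>L) = (\<integral>T. F T \<partial>L)"
proof -
  let ?h = "\<lambda>(T::cfg) r. T (\<pi> r)"
  have d: "distr L L ?h = L" using L \<pi> unfolding Sstar_def by blast
  have hb: "?h \<in> measurable borel borel"
    by (rule borel_measurable_continuous_onI[OF cont_rowperm])
  have "?h \<in> measurable (restrict_space borel (Qcfg q)) (restrict_space borel (Qcfg q))"
    by (rule measurable_restrict_space3[OF hb]) (auto simp: Qcfg_def)
  then have hL: "?h \<in> measurable L L"
    using measurable_cong_sets[OF Sstar_sets[OF L] Sstar_sets[OF L]] by blast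
  have "(\<integral>T. F T \<partial>L) = (\<integral>T. F T \<partial>(distr L L ?h))" by (simp add: d)
  also have "\<dots> = (\<integral>T. F (?h T) \<partial>L)"
    by (rule integral_distr[OF hL Sstar_meas[OF F L]])
  finally show ?thesis by simp
qed

lemma pair_perm:
  assumes "i \<noteq> (j::nat)"
  obtains \<pi> where "finitary_perm \<pi>" "\<pi> 0 = i" "\<pi> 1 = j"
proof -
  define t1 where "t1 = Transposition.transpose 0 i"
  define c where "c = t1 j"
  define \<pi> where "\<pi> = t1 \<circ> Transposition.transpose 1 c"
  have "finitary_perm \<pi>" unfolding \<pi>_def t1_def
    by (intro finitary_comp finitary_transpose)
  moreover have "\<pi> 1 = j" unfolding \<pi>_def c_def t1_def by simp
  moreover have "c \<noteq> 0" using assms unfolding c_def t1_def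
    by (auto simp: Transposition.transpose_def)
  then have "\<pi> 0 = i" unfolding \<pi>_def t1_def
    by (auto simp: Transposition.transpose_def)
  ultimately show ?thesis using that by blast
qed



lemma ln_tangent:
  fixes y m :: real assumes "0 < y" "0 < m"
  shows "ln y \<le> ln m + y / m - 1"
proof -
  have "ln (y / m) \<le> y / m - 1" using assms by (intro ln_le_minus_one) simp
  then show ?thesis using assms by (simp add: ln_div)
qed

lemma sum_transpose_drop:
  fixes X :: "nat \<Rightarrow> real"
  assumes "j < Suc R"
  shows "(\<Sum>r<R. X (Transposition.transpose j R r)) = (\<Sum>r<Suc R. X r) - X j"
proof -
  have p: "Transposition.transpose j R permutes {..<Suc R}"
    using assms by (intro permutes_swap_id) auto
  have "(\<Sum>r<Suc R. X r) = (\<Sum>r<Suc R. X (Transposition.transpose j R r))"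
    using sum.permute[OF p, of X] by (simp add: comp_def)
  also have "\<dots> = (\<Sum>r<R. X (Transposition.transpose j R r)) + X j"
    by simp
  finally show ?thesis by simp
qed

lemma concA:
  fixes X :: "nat \<Rightarrow> real"
  assumes R: "1 \<le> R" and a: "0 < a" and Xa: "\<And>r. a \<le> X r"
  shows "(1 / real (Suc R)) * (\<Sum>j<Suc R. ln (\<Sum>r<R. 1 / real R * X (Transposition.transpose j R r)))
         \<le> ln (\<Sum>r<Suc R. 1 / real (Suc R) * X r)"
proof -
  define S where "S = (\<Sum>r<Suc R. X r)"
  define m where "m = S / real (Suc R)"
  define Y where "Y j = (S - X j) / real R" for j
  have Spos: "S \<ge> real (Suc R) * a" unfolding S_def
    using sum_mono[of "{..<Suc R}" "\<lambda>_. a" X] Xa by simp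
  have m: "0 < m" unfolding m_def using Spos a
    by (smt (verit) divide_pos_pos mult_pos_pos of_nat_0_less_iff zero_less_Suc)
  have YS: "(\<Sum>r<R. 1 / real R * X (Transposition.transpose j R r)) = Y j" if "j < Suc R" for j
  proof -
    have "(\<Sum>r<R. 1 / real R * X (Transposition.transpose j R r)) = (\<Sum>r<R. X (Transposition.transpose j R r)) / real R"
      by (simp add: sum_divide_distrib)
    then show ?thesis using sum_transpose_drop[OF that, of X] unfolding Y_def S_def by simp
  qed
  have Ypos: "0 < Y j" if "j < Suc R" for j
  proof -
    have "(\<Sum>r<R. X (Transposition.transpose j R r)) \<ge> real R * a"
      using sum_mono[of "{..<R}" "\<lambda>_. a"] Xa by simp
    moreover have "real R * a > 0" using R a by simp
    ultimately show ?thesis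
      using sum_transpose_drop[OF that, of X] R unfolding Y_def S_def by simp
  qed
  have sumY: "(\<Sum>j<Suc R. Y j) = S"
  proof -
    have "(\<Sum>j<Suc R. Y j) = (\<Sum>j<Suc R. S - X j) / real R"
      unfolding Y_def by (rule sum_divide_distrib[symmetric])
    also have "\<dots> = (real (Suc R) * S - S) / real R"
      by (simp add: sum_subtractf S_def)
    also have "\<dots> = S" using R by (simp add: field_simps)
    finally show ?thesis .
  qed
  have "(\<Sum>j<Suc R. ln (Y j)) \<le> (\<Sum>j<Suc R. ln m + Y j / m - 1)"
    by (intro sum_mono ln_tangent Ypos m) simp
  also have "\<dots> = real (Suc R) * ln m + S / m - real (Suc R)"
    by (simp add: sum.distrib sum_subtractf sum_divide_distrib[symmetric] sumY del: sum.lessThan_Suc)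
  also have "\<dots> = real (Suc R) * ln m"
    using m unfolding m_def by (simp add: field_simps)
  finally have "(\<Sum>j<Suc R. ln (Y j)) \<le> real (Suc R) * ln m" .
  moreover have "(\<Sum>r<Suc R. 1 / real (Suc R) * X r) = m"
    unfolding m_def S_def by (simp add: sum_divide_distrib del: sum.lessThan_Suc)
  moreover have "(\<Sum>j<Suc R. ln (\<Sum>r<R. 1 / real R * X (Transposition.transpose j R r))) = (\<Sum>j<Suc R. ln (Y j))"
    using YS by (intro sum.cong) auto
  ultimately show ?thesis
    by (simp add: field_simps del: sum.lessThan_Suc)
qed



lemma concB:
  fixes x y a :: real
  assumes a: "0 < a" and x: "a \<le> x" and y: "a \<le> y"
  shows "ln y + x / y - 1 - (x - y)\<^sup>2 / a\<^sup>2 \<le> ln x"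
proof -
  have xp: "0 < x" "0 < y" using a x y by auto
  have "ln y - ln x \<le> y / x - 1" using ln_tangent[of y x] xp by simp
  then have 1: "ln y + (x - y) / x \<le> ln x" using xp by (simp add: field_simps)
  have 2: "(x - y) / x = x / y - 1 - (x - y)\<^sup>2 / (x * y)"
    using xp by (simp add: field_simps power2_eq_square)
  have "a\<^sup>2 \<le> x * y" using a x y by (simp add: power2_eq_square mult_mono)
  then have "(x - y)\<^sup>2 / (x * y) \<le> (x - y)\<^sup>2 / a\<^sup>2"
    using a xp by (intro divide_left_mono) auto
  with 1 2 show ?thesis by linarith
qed

lemma sum_if_eq:
  fixes t s :: real
  shows "(\<Sum>i<m. \<Sum>j<n. if i = j then t else s) = real (min m n) * (t - s) + real m * real n * s"
proof -
  have inner: "(\<Sum>j<n. if i = j then t else s) = (if i < n then t - s else 0) + real n * s" for i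
  proof -
    have "(\<Sum>j<n. if i = j then t else s) = (\<Sum>j<n. (if i = j then t - s else 0) + s)"
      by (intro sum.cong) auto
    also have "\<dots> = (if i < n then t - s else 0) + real n * s"
      by (simp add: sum.distrib)
    finally show ?thesis .
  qed
  have "(\<Sum>i<m. (if i < n then t - s else 0)) = real (card ({..<m} \<inter> {..<n})) * (t - s)"
    by (simp add: sum.If_cases lessThan_def)
  moreover have "card ({..<m} \<inter> {..<n}) = min m n"
  proof -
    have "{..<m} \<inter> {..<n} = {..<min m n}" by auto
    then show ?thesis by simp
  qed
  ultimately show ?thesis by (simp add: inner sum.distrib)
qed

locale rowfun =
  fixes q :: nat and L :: "cfg measure" and g :: "(nat \<Rightarrow> nat) \<Rightarrow> real" and a b :: real
  assumes L: "L \<in> Sstar q" and gc: "continuous_on UNIV g" and a: "0 < a"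
    and ga: "\<And>\<tau>. a \<le> g \<tau>" and gb: "\<And>\<tau>. g \<tau> \<le> b"
begin

lemma ab: "a \<le> b" using ga gb order_trans by blast

lemma prob: "prob_space L" using Sstar_prob[OF L] .

lemma Xm[measurable]: "(\<lambda>T::cfg. g (T i)) \<in> borel_measurable borel"
  by (rule borel_measurable_continuous_onI)
     (rule continuous_on_compose2[OF gc continuous_on_product_coordinates]; simp)

lemma intb:
  fixes F :: "cfg \<Rightarrow> real"
  assumes "F \<in> borel_measurable borel" "\<And>T. \<bar>F T\<bar> \<le> B"
  shows "integrable L F"
  using assms by (intro finite_measure.integrable_const_bound[OF prob_space.finite_measure[OF prob], of F B] Sstar_meas[OF _ L]) auto

definition U :: "nat \<Rightarrow> real" where
  "U R = (\<integral>T. ln (\<Sum>r<R. 1 / real R * g (T r)) \<partial>L)"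

lemma avg_bounds:
  fixes X :: "nat \<Rightarrow> real"
  assumes "1 \<le> R" and that: "\<And>r. a \<le> X r" "\<And>r. X r \<le> b"
  shows "a \<le> (\<Sum>r<R. 1 / real R * X r)" "(\<Sum>r<R. 1 / real R * X r) \<le> b"
proof -
  have "(\<Sum>r<R. 1 / real R * X r) \<ge> (\<Sum>r<R. 1 / real R * a)"
    using that assms by (intro sum_mono mult_left_mono) auto
  then show "a \<le> (\<Sum>r<R. 1 / real R * X r)" using assms by simp
  have "(\<Sum>r<R. 1 / real R * X r) \<le> (\<Sum>r<R. 1 / real R * b)"
    using that assms by (intro sum_mono mult_left_mono) auto
  then show "(\<Sum>r<R. 1 / real R * X r) \<le> b" using assms by simp
qed

lemma lnavg_bound: "\<bar>ln (\<Sum>r<R. 1 / real R * g (T r))\<bar> \<le> \<bar>ln a\<bar> + \<bar>ln b\<bar>"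
proof (cases "R = 0")
  case True then show ?thesis by simp
next
  case False
  then have R: "1 \<le> R" by simp
  have l: "a \<le> (\<Sum>r<R. 1 / real R * g (T r))" and u: "(\<Sum>r<R. 1 / real R * g (T r)) \<le> b"
    using avg_bounds[OF R, of "\<lambda>r. g (T r)"] ga gb by auto
  have "ln a \<le> ln (\<Sum>r<R. 1 / real R * g (T r))" using l a by simp
  moreover have "ln (\<Sum>r<R. 1 / real R * g (T r)) \<le> ln b" using l u a by simp
  ultimately show ?thesis by linarith
qed

lemma U_bound: "\<bar>U R\<bar> \<le> \<bar>ln a\<bar> + \<bar>ln b\<bar>"
proof -
  have i: "integrable L (\<lambda>T. ln (\<Sum>r<R. 1 / real R * g (T r)))"
    by (rule intb[OF _ lnavg_bound]) measurable
  have "\<bar>U R\<bar> \<le> (\<integral>T. \<bar>ln (\<Sum>r<R. 1 / real R * g (T r))\<bar> \<partial>L)"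
    unfolding U_def by (rule integral_abs_bound)
  also have "\<dots> \<le> \<bar>ln a\<bar> + \<bar>ln b\<bar>"
    using i lnavg_bound by (intro prob_space.integral_le_const[OF prob]) auto
  finally show ?thesis .
qed

end



context rowfun
begin

lemma U_mono:
  assumes R: "1 \<le> R"
  shows "U R \<le> U (Suc R)"
proof -
  let ?F = "\<lambda>R (T::cfg). ln (\<Sum>r<R. 1 / real R * g (T r))"
  let ?t = "\<lambda>j. Transposition.transpose j R"
  have Fm: "?F R \<in> borel_measurable borel" for R by measurable
  have i1: "integrable L (\<lambda>T. ?F R (\<lambda>r. T (?t j r)))" for j
    by (rule intb[OF _ lnavg_bound]) measurable
  have i2: "integrable L (?F (Suc R))"
    by (rule intb[OF _ lnavg_bound]) measurable
  have e: "(\<integral>T. ?F R (\<lambda>r. T (?t j r)) \<partial>L) = U R" for j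
    unfolding U_def by (rule exch[OF L finitary_transpose Fm])
  have "U R = (1 / real (Suc R)) * (\<Sum>j<Suc R. (\<integral>T. ?F R (\<lambda>r. T (?t j r)) \<partial>L))"
  proof -
    have "(\<Sum>j<Suc R. (\<integral>T. ?F R (\<lambda>r. T (?t j r)) \<partial>L)) = (\<Sum>j<Suc R. U R)"
      by (rule sum.cong[OF refl e])
    then show ?thesis by (simp del: sum.lessThan_Suc)
  qed
  also have "\<dots> = (\<integral>T. (1 / real (Suc R)) * (\<Sum>j<Suc R. ?F R (\<lambda>r. T (?t j r))) \<partial>L)"
    using i1 by (simp add: integral_sum del: sum.lessThan_Suc)
  also have "\<dots> \<le> (\<integral>T. ?F (Suc R) T \<partial>L)"
  proof (rule integral_mono)
    show "integrable L (\<lambda>T. (1 / real (Suc R)) * (\<Sum>j<Suc R. ?F R (\<lambda>r. T (?t j r))))"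
    proof -
      have "integrable L (\<lambda>T. \<Sum>j<Suc R. ?F R (\<lambda>r. T (?t j r)))"
        by (rule Bochner_Integration.integrable_sum) (rule i1)
      then show ?thesis by (rule integrable_mult_right)
    qed
    show "integrable L (?F (Suc R))" by (rule i2)
    fix T :: cfg
    show "(1 / real (Suc R)) * (\<Sum>j<Suc R. ?F R (\<lambda>r. T (?t j r))) \<le> ?F (Suc R) T"
      using concA[OF R a, of "\<lambda>r. g (T r)"] ga by simp
  qed
  also have "\<dots> = U (Suc R)" unfolding U_def ..
  finally show ?thesis .
qed

end



context rowfun
begin

lemma gpos: "0 < g \<tau>" using a ga[of \<tau>] by linarith

lemma P_sym:
  "(\<integral>T. g (T i) * g (T j) \<partial>L) = (if i = j then (\<integral>T. g (T 0) * g (T 0) \<partial>L) else (\<integral>T. g (T 0) * g (T 1) \<partial>L))"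
proof (cases "i = j")
  case True
  have "(\<integral>T. g (T (Transposition.transpose 0 i 0)) * g (T (Transposition.transpose 0 i 0)) \<partial>L) = (\<integral>T. g (T 0) * g (T 0) \<partial>L)"
    using exch[OF L finitary_transpose, of "\<lambda>T. g (T 0) * g (T 0)" 0 i] by simp
  then show ?thesis using True by simp
next
  case False
  obtain \<pi> where \<pi>: "finitary_perm \<pi>" "\<pi> 0 = i" "\<pi> 1 = j" using pair_perm[OF False] by blast
  have "(\<integral>T. g (T (\<pi> 0)) * g (T (\<pi> 1)) \<partial>L) = (\<integral>T. g (T 0) * g (T 1) \<partial>L)"
    using exch[OF L \<pi>(1), of "\<lambda>T. g (T 0) * g (T 1)"] by simp
  then show ?thesis using False \<pi> by simp
qed

lemma prod_int: "integrable L (\<lambda>T. g (T i) * g (T j))"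
proof (rule intb)
  show "(\<lambda>T. g (T i) * g (T j)) \<in> borel_measurable borel" by measurable
  fix T :: cfg
  have "\<bar>g (T i) * g (T j)\<bar> = g (T i) * g (T j)" using gpos[of "T i"] gpos[of "T j"] by (simp add: abs_mult)
  also have "\<dots> \<le> b * b" using gb gpos a ab by (intro mult_mono) (auto intro: less_imp_le)
  finally show "\<bar>g (T i) * g (T j)\<bar> \<le> b * b" .
qed

lemma sum_prod_int:
  "(\<integral>T. (\<Sum>i<m. c * g (T i)) * (\<Sum>j<n. d * g (T j)) \<partial>L)
   = c * d * (real (min m n) * ((\<integral>T. g (T 0) * g (T 0) \<partial>L) - (\<integral>T. g (T 0) * g (T 1) \<partial>L))
       + real m * real n * (\<integral>T. g (T 0) * g (T 1) \<partial>L))"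
proof -
  let ?t = "(\<integral>T. g (T 0) * g (T 0) \<partial>L)" and ?s = "(\<integral>T. g (T 0) * g (T 1) \<partial>L)"
  have pw: "(\<Sum>i<m. c * g (T i)) * (\<Sum>j<n. d * g (T j)) = (\<Sum>i<m. \<Sum>j<n. c * d * (g (T i) * g (T j)))" for T :: cfg
    by (simp add: sum_product mult_ac)
  have "(\<integral>T. (\<Sum>i<m. c * g (T i)) * (\<Sum>j<n. d * g (T j)) \<partial>L)
      = (\<integral>T. (\<Sum>i<m. \<Sum>j<n. c * d * (g (T i) * g (T j))) \<partial>L)" by (simp only: pw)
  also have "\<dots> = (\<Sum>i<m. \<Sum>j<n. c * d * (\<integral>T. g (T i) * g (T j) \<partial>L))"
    using prod_int by (simp add: integral_sum)
  also have "\<dots> = (\<Sum>i<m. \<Sum>j<n. c * d * (if i = j then ?t else ?s))"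
    by (intro sum.cong refl arg_cong[where f="\<lambda>z. c * d * z"] P_sym)
  also have "\<dots> = c * d * (\<Sum>i<m. \<Sum>j<n. if i = j then ?t else ?s)"
    by (simp add: sum_distrib_left)
  also have "\<dots> = c * d * (real (min m n) * (?t - ?s) + real m * real n * ?s)"
    by (simp add: sum_if_eq)
  finally show ?thesis .
qed

end



context rowfun
begin

lemma U_B:
  assumes R: "1 \<le> R" and RR: "R \<le> R'"
  shows "U R' \<le> U R + (b\<^sup>2 - a\<^sup>2) / (a\<^sup>2 * real R)"
proof -
  have R': "1 \<le> R'" using R RR by simp
  define x where "x = (\<lambda>T::cfg. \<Sum>r<R. 1 / real R * g (T r))"
  define y where "y = (\<lambda>T::cfg. \<Sum>r<R'. 1 / real R' * g (T r))"
  have xm[measurable]: "x \<in> borel_measurable borel" unfolding x_def by measurable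
  have ym[measurable]: "y \<in> borel_measurable borel" unfolding y_def by measurable
  have xb: "a \<le> x T" "x T \<le> b" for T
    unfolding x_def using avg_bounds[OF R, of "\<lambda>r. g (T r)"] ga gb by auto
  have yb: "a \<le> y T" "y T \<le> b" for T
    unfolding y_def using avg_bounds[OF R', of "\<lambda>r. g (T r)"] ga gb by auto
  have ypos: "0 < y T" for T using yb(1)[of T] a by linarith
  define h where "h = (\<lambda>i (T::cfg). g (T i) / y T)"
  have hm[measurable]: "h i \<in> borel_measurable borel" for i unfolding h_def by measurable
  have hb: "\<bar>h i T\<bar> \<le> b / a" for i T
  proof -
    have "\<bar>h i T\<bar> = g (T i) / y T" unfolding h_def using gpos[of "T i"] ypos[of T] by simp
    also have "\<dots> \<le> b / a" using gb[of "T i"] yb(1)[of T] gpos[of "T i"] a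
      by (intro frac_le) auto
    finally show ?thesis .
  qed
  have hi: "integrable L (h i)" for i by (rule intb[OF hm hb])
  have hsym: "(\<integral>T. h i T \<partial>L) = (\<integral>T. h 0 T \<partial>L)" if "i < R'" for i
  proof -
    let ?\<tau> = "Transposition.transpose 0 i"
    have p: "?\<tau> permutes {..<R'}" using that R' by (intro permutes_swap_id) auto
    have "y (\<lambda>r. T (?\<tau> r)) = y T" for T :: cfg
      unfolding y_def using sum.permute[OF p, of "\<lambda>r. 1 / real R' * g (T r)"] by (simp add: comp_def)
    then have "h 0 (\<lambda>r. T (?\<tau> r)) = h i T" for T unfolding h_def by simp
    then show ?thesis using exch[OF L finitary_transpose[of 0 i] hm[of 0]] by simp
  qed
  have h0: "(\<integral>T. h 0 T \<partial>L) = 1"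
  proof -
    have pw: "(\<Sum>i<R'. 1 / real R' * h i T) = 1" for T
    proof -
      have "(\<Sum>i<R'. 1 / real R' * h i T) = (\<Sum>i<R'. 1 / real R' * g (T i) / y T)"
        unfolding h_def by simp
      also have "\<dots> = (\<Sum>i<R'. 1 / real R' * g (T i)) / y T"
        by (rule sum_divide_distrib[symmetric])
      also have "\<dots> = y T / y T" unfolding y_def by simp
      finally have "(\<Sum>i<R'. 1 / real R' * h i T) = y T / y T" .
      then show ?thesis using ypos[of T] by simp
    qed
    have "(1::real) = (\<integral>T. 1 \<partial>L)" using prob_space.prob_space[OF prob] by simp
    also have "\<dots> = (\<integral>T. (\<Sum>i<R'. 1 / real R' * h i T) \<partial>L)"
      by (simp only: pw)
    also have "\<dots> = (\<Sum>i<R'. 1 / real R' * (\<integral>T. h i T \<partial>L))"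
      using hi by (simp add: integral_sum)
    also have "\<dots> = (\<Sum>i<R'. 1 / real R' * (\<integral>T. h 0 T \<partial>L))"
      by (intro sum.cong refl arg_cong[where f="\<lambda>z. 1 / real R' * z"] hsym) auto
    also have "\<dots> = (\<integral>T. h 0 T \<partial>L)" using R' by simp
    finally show ?thesis by simp
  qed
  have xy: "(\<integral>T. x T / y T \<partial>L) = 1"
  proof -
    have pw: "x T / y T = (\<Sum>i<R. 1 / real R * h i T)" for T
    proof -
      have "x T / y T = (\<Sum>i<R. 1 / real R * g (T i) / y T)"
        unfolding x_def by (rule sum_divide_distrib)
      then show ?thesis unfolding h_def by simp
    qed
    have "(\<integral>T. x T / y T \<partial>L) = (\<integral>T. (\<Sum>i<R. 1 / real R * h i T) \<partial>L)"
      by (simp only: pw)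
    also have "\<dots> = (\<Sum>i<R. 1 / real R * (\<integral>T. h i T \<partial>L))"
      using hi by (simp add: integral_sum)
    also have "\<dots> = (\<Sum>i<R. 1 / real R * (\<integral>T. h 0 T \<partial>L))"
      using RR by (intro sum.cong refl arg_cong[where f="\<lambda>z. 1 / real R * z"] hsym) auto
    also have "\<dots> = 1" using R by (simp add: h0)
    finally show ?thesis .
  qed
  define t where "t = (\<integral>T. g (T 0) * g (T 0) \<partial>L)"
  define s where "s = (\<integral>T. g (T 0) * g (T 1) \<partial>L)"
  have tb: "t \<le> b\<^sup>2"
    unfolding t_def
  proof (rule prob_space.integral_le_const[OF prob prod_int], rule AE_I2)
    fix T :: cfg show "g (T 0) * g (T 0) \<le> b\<^sup>2"
      using gb[of "T 0"] gpos[of "T 0"] by (simp add: power2_eq_square mult_mono)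
  qed
  have sb: "a\<^sup>2 \<le> s"
    unfolding s_def
  proof (rule prob_space.integral_ge_const[OF prob prod_int], rule AE_I2)
    fix T :: cfg show "a\<^sup>2 \<le> g (T 0) * g (T 1)"
      using ga[of "T 0"] ga[of "T 1"] a by (simp add: power2_eq_square mult_mono)
  qed
  have spi: "integrable L (\<lambda>T. (\<Sum>i<m. c * g (T i)) * (\<Sum>j<n. d * g (T j)))" for m n c d
  proof -
    have "(\<lambda>T. (\<Sum>i<m. c * g (T i)) * (\<Sum>j<n. d * g (T j))) = (\<lambda>T. \<Sum>i<m. \<Sum>j<n. c * d * (g (T i) * g (T j)))"
      by (simp add: sum_product mult_ac)
    moreover have "integrable L (\<lambda>T. \<Sum>i<m. \<Sum>j<n. c * d * (g (T i) * g (T j)))"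
      using prod_int by simp
    ultimately show ?thesis by simp
  qed
  have sq: "(\<integral>T. (x T - y T)\<^sup>2 \<partial>L) = (t - s) * (1 / real R - 1 / real R')"
  proof -
    have pw: "(x T - y T)\<^sup>2 = x T * x T - 2 * (x T * y T) + y T * y T" for T
      by (simp add: power2_eq_square algebra_simps)
    have ix: "integrable L (\<lambda>T. x T * x T)" "integrable L (\<lambda>T. x T * y T)" "integrable L (\<lambda>T. y T * y T)"
      unfolding x_def y_def by (rule spi)+
    have "(\<integral>T. (x T - y T)\<^sup>2 \<partial>L) = (\<integral>T. x T * x T \<partial>L) - 2 * (\<integral>T. x T * y T \<partial>L) + (\<integral>T. y T * y T \<partial>L)"
      using ix by (simp add: pw)
    also have "\<dots> = (1 / real R) * (1 / real R) * (real R * (t - s) + real R * real R * s)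
        - 2 * ((1 / real R) * (1 / real R') * (real R * (t - s) + real R * real R' * s))
        + (1 / real R') * (1 / real R') * (real R' * (t - s) + real R' * real R' * s)"
      unfolding x_def y_def sum_prod_int t_def[symmetric] s_def[symmetric] using RR
      by (simp add: min_def)
    also have "\<dots> = (t - s) * (1 / real R - 1 / real R')"
      using R R' by (simp add: field_simps)
    finally show ?thesis .
  qed
  have sq2: "(\<integral>T. (x T - y T)\<^sup>2 \<partial>L) \<le> (b\<^sup>2 - a\<^sup>2) / real R"
  proof -
    have d: "0 \<le> 1 / real R - 1 / real R'" "1 / real R - 1 / real R' \<le> 1 / real R"
      using R RR by (auto simp: frac_le)
    have "(t - s) * (1 / real R - 1 / real R') \<le> (b\<^sup>2 - a\<^sup>2) * (1 / real R - 1 / real R')"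
      using tb sb d by (intro mult_right_mono) auto
    also have "\<dots> \<le> (b\<^sup>2 - a\<^sup>2) * (1 / real R)"
      using d ab a by (intro mult_left_mono) (auto simp: power_mono)
    finally show ?thesis using sq by simp
  qed
  have lx: "integrable L (\<lambda>T. ln (x T))"
    unfolding x_def by (rule intb[OF _ lnavg_bound]) measurable
  have ly: "integrable L (\<lambda>T. ln (y T))"
    unfolding y_def by (rule intb[OF _ lnavg_bound]) measurable
  have ixy: "integrable L (\<lambda>T. x T / y T)"
  proof -
    have "(\<lambda>T. x T / y T) = (\<lambda>T. \<Sum>i<R. 1 / real R * h i T)"
    proof
      fix T
      have "x T / y T = (\<Sum>i<R. 1 / real R * g (T i) / y T)"
        unfolding x_def by (rule sum_divide_distrib)
      then show "x T / y T = (\<Sum>i<R. 1 / real R * h i T)" unfolding h_def by simp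
    qed
    then show ?thesis using hi by simp
  qed
  have isq: "integrable L (\<lambda>T. (x T - y T)\<^sup>2)"
  proof -
    have "(\<lambda>T. (x T - y T)\<^sup>2) = (\<lambda>T. x T * x T - 2 * (x T * y T) + y T * y T)"
      by (simp add: power2_eq_square algebra_simps)
    moreover have "integrable L (\<lambda>T. x T * x T)" "integrable L (\<lambda>T. x T * y T)" "integrable L (\<lambda>T. y T * y T)"
      unfolding x_def y_def by (rule spi)+
    ultimately show ?thesis by simp
  qed
  have "(\<integral>T. ln (y T) + x T / y T - 1 - (x T - y T)\<^sup>2 / a\<^sup>2 \<partial>L) \<le> (\<integral>T. ln (x T) \<partial>L)"
    using concB[OF a xb(1) yb(1)] lx ly ixy isq
      finite_measure.integrable_const[OF prob_space.finite_measure[OF prob], of "1::real"]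
    by (intro integral_mono) auto
  moreover have "(\<integral>T. ln (y T) + x T / y T - 1 - (x T - y T)\<^sup>2 / a\<^sup>2 \<partial>L)
      = (\<integral>T. ln (y T) \<partial>L) + (\<integral>T. x T / y T \<partial>L) - 1 - (\<integral>T. (x T - y T)\<^sup>2 \<partial>L) / a\<^sup>2"
    using lx ly ixy isq prob_space.prob_space[OF prob]
      finite_measure.integrable_const[OF prob_space.finite_measure[OF prob], of "1::real"] by simp
  moreover have "U R = (\<integral>T. ln (x T) \<partial>L)" unfolding U_def x_def ..
  moreover have "U R' = (\<integral>T. ln (y T) \<partial>L)" unfolding U_def y_def ..
  ultimately have "U R' + 1 - 1 - (\<integral>T. (x T - y T)\<^sup>2 \<partial>L) / a\<^sup>2 \<le> U R"
    using xy by linarith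
  moreover have "(\<integral>T. (x T - y T)\<^sup>2 \<partial>L) / a\<^sup>2 \<le> ((b\<^sup>2 - a\<^sup>2) / real R) / a\<^sup>2"
    using sq2 a by (intro divide_right_mono) auto
  moreover have "((b\<^sup>2 - a\<^sup>2) / real R) / a\<^sup>2 = (b\<^sup>2 - a\<^sup>2) / (a\<^sup>2 * real R)"
    by (simp add: mult.commute)
  ultimately show ?thesis by linarith
qed

end



lemma lnavg_bound_gen:
  fixes X :: "nat \<Rightarrow> real"
  assumes a: "0 < a" and Xa: "\<And>r. a \<le> X r" and Xb: "\<And>r. X r \<le> b"
  shows "\<bar>ln (\<Sum>r<R. 1 / real R * X r)\<bar> \<le> \<bar>ln a\<bar> + \<bar>ln b\<bar>"
proof (cases "R = 0")
  case True then show ?thesis by simp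
next
  case False
  then have R: "1 \<le> R" by simp
  have "(\<Sum>r<R. 1 / real R * X r) \<ge> (\<Sum>r<R. 1 / real R * a)"
    using Xa R by (intro sum_mono mult_left_mono) auto
  then have l: "a \<le> (\<Sum>r<R. 1 / real R * X r)" using R by simp
  have "(\<Sum>r<R. 1 / real R * X r) \<le> (\<Sum>r<R. 1 / real R * b)"
    using Xb R by (intro sum_mono mult_left_mono) auto
  then have u: "(\<Sum>r<R. 1 / real R * X r) \<le> b" using R by simp
  have "ln a \<le> ln (\<Sum>r<R. 1 / real R * X r)" using l a by simp
  moreover have "ln (\<Sum>r<R. 1 / real R * X r) \<le> ln b" using l u a by simp
  ultimately show ?thesis by linarith
qed

locale scheme =
  fixes q :: nat and A :: "nat \<Rightarrow> 'i set" and w :: "nat \<Rightarrow> real"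
    and g :: "nat \<Rightarrow> 'i \<Rightarrow> (nat \<Rightarrow> nat) \<Rightarrow> real" and a b :: "nat \<Rightarrow> real"
  assumes finA: "\<And>k. finite (A k)" and w: "\<And>k. 0 \<le> w k"
    and gc: "\<And>k i. i \<in> A k \<Longrightarrow> continuous_on UNIV (g k i)"
    and apos: "\<And>k. 0 < a k"
    and ga: "\<And>k i \<tau>. i \<in> A k \<Longrightarrow> a k \<le> g k i \<tau>"
    and gb: "\<And>k i \<tau>. i \<in> A k \<Longrightarrow> g k i \<tau> \<le> b k"
    and sumB: "summable (\<lambda>k. w k * real (card (A k)) * (\<bar>ln (a k)\<bar> + \<bar>ln (b k)\<bar>))"
    and sumE: "summable (\<lambda>k. w k * real (card (A k)) * ((b k)\<^sup>2 - (a k)\<^sup>2) / (a k)\<^sup>2)"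
begin

definition phi :: "nat \<Rightarrow> nat \<Rightarrow> cfg \<Rightarrow> real" where
  "phi k R T = (\<Sum>i\<in>A k. w k * ln (\<Sum>r<R. 1 / real R * g k i (T r)))"

definition Bk where "Bk k = w k * real (card (A k)) * (\<bar>ln (a k)\<bar> + \<bar>ln (b k)\<bar>)"
definition Ek where "Ek k = w k * real (card (A k)) * ((b k)\<^sup>2 - (a k)\<^sup>2) / (a k)\<^sup>2"
definition BB where "BB = (\<Sum>k. Bk k)"
definition EE where "EE = (\<Sum>k. Ek k)"

lemma sBk: "summable Bk" using sumB unfolding Bk_def .
lemma sEk: "summable Ek" using sumE unfolding Ek_def .

lemma phi_bound: "\<bar>phi k R T\<bar> \<le> Bk k"
proof -
  have "\<bar>phi k R T\<bar> \<le> (\<Sum>i\<in>A k. \<bar>w k * ln (\<Sum>r<R. 1 / real R * g k i (T r))\<bar>)"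
    unfolding phi_def by (rule sum_abs)
  also have "\<dots> \<le> (\<Sum>i\<in>A k. w k * (\<bar>ln (a k)\<bar> + \<bar>ln (b k)\<bar>))"
  proof (rule sum_mono)
    fix i assume i: "i \<in> A k"
    have "\<bar>ln (\<Sum>r<R. 1 / real R * g k i (T r))\<bar> \<le> \<bar>ln (a k)\<bar> + \<bar>ln (b k)\<bar>"
      by (rule lnavg_bound_gen[OF apos ga[OF i] gb[OF i]])
    then show "\<bar>w k * ln (\<Sum>r<R. 1 / real R * g k i (T r))\<bar> \<le> w k * (\<bar>ln (a k)\<bar> + \<bar>ln (b k)\<bar>)"
      using w[of k] by (simp add: abs_mult mult_left_mono)
  qed
  also have "\<dots> = Bk k" unfolding Bk_def by simp
  finally show ?thesis .
qed

lemma Bk_nonneg: "0 \<le> Bk k" using phi_bound[of k 0 undefined] by linarith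

lemma phi_cont: "continuous_on UNIV (phi k R)"
proof (cases "R = 0")
  case True
  then show ?thesis unfolding phi_def by simp
next
  case False
  have inner: "continuous_on UNIV (\<lambda>T::cfg. g k i (T r))" if "i \<in> A k" for i r
    by (rule continuous_on_compose2[OF gc[OF that] continuous_on_product_coordinates]) simp
  have pos: "0 < (\<Sum>r<R. 1 / real R * g k i (T r))" if "i \<in> A k" for i and T :: cfg
  proof -
    have "0 < g k i (T r)" for r using apos[of k] ga[OF that, of "T r"] by linarith
    then show ?thesis using False by (intro sum_pos) auto
  qed
  have pos2: "(\<Sum>r<R. g k i (T r) / real R) \<noteq> 0" if "i \<in> A k" for i and T :: cfg
    using pos[OF that, of T] by simp
  show ?thesis unfolding phi_def
    by (intro continuous_on_sum continuous_on_mult continuous_on_const continuous_on_ln inner)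
       (auto dest: pos pos2)
qed

definition Phi :: "nat \<Rightarrow> cfg \<Rightarrow> real" where
  "Phi R T = (\<Sum>k. phi k R T)"

lemma phi_summable: "summable (\<lambda>k. phi k R T)"
  by (rule summable_comparison_test[OF _ sBk]) (auto intro: phi_bound)

lemma Phi_bound: "\<bar>Phi R T\<bar> \<le> BB"
proof -
  have "\<bar>Phi R T\<bar> \<le> (\<Sum>k. \<bar>phi k R T\<bar>)"
    unfolding Phi_def by (rule summable_rabs[OF summable_comparison_test[OF _ sBk]]) (auto intro: phi_bound)
  also have "\<dots> \<le> BB" unfolding BB_def
  proof (rule suminf_le)
    show "summable (\<lambda>k. \<bar>phi k R T\<bar>)"
      by (rule summable_comparison_test[OF _ sBk]) (simp add: phi_bound)
  qed (auto intro: phi_bound sBk)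
  finally show ?thesis .
qed

lemma Phi_cont: "continuous_on UNIV (Phi R)"
proof -
  have "uniform_limit UNIV (\<lambda>n T. \<Sum>k<n. phi k R T) (\<lambda>T. \<Sum>k. phi k R T) sequentially"
    by (rule Weierstrass_m_test[OF _ sBk]) (simp add: phi_bound)
  then have "continuous_on UNIV (\<lambda>T. \<Sum>k. phi k R T)"
    by (rule uniform_limit_theorem[rotated]) (auto intro!: always_eventually continuous_on_sum phi_cont)
  then show ?thesis unfolding Phi_def[abs_def] .
qed

lemma Phi_meas[measurable]: "Phi R \<in> borel_measurable borel"
  by (rule borel_measurable_continuous_onI[OF Phi_cont])

lemma phi_meas[measurable]: "phi k R \<in> borel_measurable borel"
  by (rule borel_measurable_continuous_onI[OF phi_cont])

end



lemma intL:
  fixes F :: "cfg \<Rightarrow> real"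
  assumes "L \<in> Sstar q" "F \<in> borel_measurable borel" "\<And>T. \<bar>F T\<bar> \<le> B"
  shows "integrable L F"
  using assms
  by (intro finite_measure.integrable_const_bound[OF prob_space.finite_measure[OF Sstar_prob], of L q F B]
        Sstar_meas[of F L q]) auto

context scheme
begin

definition V where "V L k i R = (\<integral>T. ln (\<Sum>r<R. 1 / real R * g k i (T r)) \<partial>L)"
definition c where "c L k R = (\<integral>T. phi k R T \<partial>L)"
definition u where "u L R = (\<integral>T. Phi R T \<partial>L)"

context
  fixes L assumes L: "L \<in> Sstar q"
begin

lemma V_mono: "i \<in> A k \<Longrightarrow> 1 \<le> R \<Longrightarrow> V L k i R \<le> V L k i (Suc R)"
proof -
  assume i: "i \<in> A k" and R: "1 \<le> R"
  interpret rowfun q L "g k i" "a k" "b k"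
    using L gc[OF i] apos ga[OF i] gb[OF i] by unfold_locales auto
  show ?thesis using U_mono[OF R] unfolding U_def V_def .
qed

lemma V_B: "i \<in> A k \<Longrightarrow> 1 \<le> R \<Longrightarrow> R \<le> R' \<Longrightarrow>
    V L k i R' \<le> V L k i R + ((b k)\<^sup>2 - (a k)\<^sup>2) / ((a k)\<^sup>2 * real R)"
proof -
  assume i: "i \<in> A k" and R: "1 \<le> R" "R \<le> R'"
  interpret rowfun q L "g k i" "a k" "b k"
    using L gc[OF i] apos ga[OF i] gb[OF i] by unfold_locales auto
  show ?thesis using U_B[OF R] unfolding U_def V_def .
qed

lemma V_int: "i \<in> A k \<Longrightarrow> integrable L (\<lambda>T. ln (\<Sum>r<R. 1 / real R * g k i (T r)))"
proof -
  assume i: "i \<in> A k"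
  interpret rowfun q L "g k i" "a k" "b k"
    using L gc[OF i] apos ga[OF i] gb[OF i] by unfold_locales auto
  show ?thesis by (rule intb[OF _ lnavg_bound]) measurable
qed

lemma ab_k: "i \<in> A k \<Longrightarrow> a k \<le> b k"
  using ga gb order_trans by blast

lemma c_eq: "c L k R = (\<Sum>i\<in>A k. w k * V L k i R)"
  unfolding c_def phi_def V_def using V_int by (simp add: integral_sum)

lemma c_mono: "1 \<le> R \<Longrightarrow> c L k R \<le> c L k (Suc R)"
  unfolding c_eq using V_mono w by (intro sum_mono mult_left_mono) auto

lemma c_B: "1 \<le> R \<Longrightarrow> R \<le> R' \<Longrightarrow> c L k R' \<le> c L k R + Ek k / real R"
proof -
  assume R: "1 \<le> R" "R \<le> R'"
  have "c L k R' \<le> (\<Sum>i\<in>A k. w k * (V L k i R + ((b k)\<^sup>2 - (a k)\<^sup>2) / ((a k)\<^sup>2 * real R)))"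
    unfolding c_eq using V_B[OF _ R] w by (intro sum_mono mult_left_mono) auto
  also have "\<dots> = c L k R + real (card (A k)) * (w k * (((b k)\<^sup>2 - (a k)\<^sup>2) / ((a k)\<^sup>2 * real R)))"
    unfolding c_eq by (simp add: sum.distrib distrib_left)
  also have "\<dots> = c L k R + Ek k / real R"
    unfolding Ek_def by (simp add: field_simps)
  finally show ?thesis .
qed

lemma c_bound: "\<bar>c L k R\<bar> \<le> Bk k"
proof -
  have i: "integrable L (phi k R)" by (rule intL[OF L phi_meas phi_bound])
  have "\<bar>c L k R\<bar> \<le> (\<integral>T. \<bar>phi k R T\<bar> \<partial>L)" unfolding c_def by (rule integral_abs_bound)
  also have "\<dots> \<le> Bk k"
    using i phi_bound by (intro prob_space.integral_le_const[OF Sstar_prob[OF L]]) auto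
  finally show ?thesis .
qed

lemma c_summable: "summable (\<lambda>k. c L k R)"
  by (rule summable_comparison_test[OF _ sBk]) (simp add: c_bound)

lemma u_eq: "u L R = (\<Sum>k. c L k R)"
proof -
  have i: "integrable L (phi k R)" for k by (rule intL[OF L phi_meas phi_bound])
  have ia: "(\<integral>T. \<bar>phi k R T\<bar> \<partial>L) \<le> Bk k" for k
    using i phi_bound by (intro prob_space.integral_le_const[OF Sstar_prob[OF L]]) auto
  have "(\<integral>T. (\<Sum>k. phi k R T) \<partial>L) = (\<Sum>k. (\<integral>T. phi k R T \<partial>L))"
  proof (rule integral_suminf)
    show "integrable L (phi k R)" for k by (rule i)
    show "AE T in L. summable (\<lambda>k. norm (phi k R T))"
      by (intro AE_I2 summable_comparison_test[OF _ sBk]) (simp add: phi_bound)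
    show "summable (\<lambda>k. (\<integral>T. norm (phi k R T) \<partial>L))"
      by (rule summable_comparison_test[OF _ sBk]) (simp add: ia)
  qed
  then show ?thesis unfolding u_def c_def Phi_def .
qed

lemma u_mono: "1 \<le> R \<Longrightarrow> u L R \<le> u L (Suc R)"
  unfolding u_eq by (intro suminf_le c_mono c_summable)

lemma u_B: "1 \<le> R \<Longrightarrow> R \<le> R' \<Longrightarrow> u L R' \<le> u L R + EE / real R"
proof -
  assume R: "1 \<le> R" "R \<le> R'"
  have "u L R' \<le> (\<Sum>k. c L k R + Ek k / real R)"
    unfolding u_eq using c_B[OF R] c_summable sEk
    by (intro suminf_le summable_add summable_divide) auto
  also have "\<dots> = u L R + EE / real R"
    unfolding u_eq EE_def using c_summable sEk
    by (simp add: suminf_add[symmetric] suminf_divide summable_divide)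
  finally show ?thesis .
qed

lemma u_bound: "\<bar>u L R\<bar> \<le> BB"
proof -
  have "\<bar>u L R\<bar> \<le> (\<integral>T. \<bar>Phi R T\<bar> \<partial>L)" unfolding u_def by (rule integral_abs_bound)
  also have "\<dots> \<le> BB"
    using intL[OF L Phi_meas Phi_bound] Phi_bound
    by (intro prob_space.integral_le_const[OF Sstar_prob[OF L]]) auto
  finally show ?thesis .
qed

lemma u_lim: "convergent (u L) \<and> (\<forall>R\<ge>1. \<bar>lim (u L) - u L R\<bar> \<le> EE / real R)"
proof -
  have inc: "incseq (\<lambda>n. u L (Suc n))"
    by (rule incseq_SucI) (simp add: u_mono)
  have bd: "\<forall>n. u L (Suc n) \<le> BB" using u_bound by (simp add: abs_le_iff)
  obtain l where l: "(\<lambda>n. u L (Suc n)) \<longlonglongrightarrow> l" "\<forall>n. u L (Suc n) \<le> l"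
    using incseq_convergent[OF inc bd] by blast
  have lim1: "u L \<longlonglongrightarrow> l" using l(1) by (simp add: filterlim_sequentially_Suc)
  then have cv: "convergent (u L)" by (auto simp: convergent_def)
  have ll: "lim (u L) = l" using lim1 by (rule limI)
  have "\<bar>lim (u L) - u L R\<bar> \<le> EE / real R" if R: "1 \<le> R" for R
  proof -
    have "u L R \<le> l" using l(2)[rule_format, of "R - 1"] R by simp
    moreover have "l \<le> u L R + EE / real R"
      using lim1 by (rule LIMSEQ_le_const2) (use u_B[OF R] in auto)
    ultimately show ?thesis using ll by simp
  qed
  then show ?thesis using cv by blast
qed

end

end



context scheme
begin

lemma u_cont_W: "continuous_map (weak_topology q) euclideanreal (\<lambda>L. u L R)"
  unfolding continuous_map_def
proof (intro conjI allI impI)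
  show "(\<lambda>L. u L R) \<in> topspace (weak_topology q) \<rightarrow> topspace euclideanreal" by simp
  fix U :: "real set" assume "openin euclideanreal U"
  then have U: "open U" by simp
  have "{L. (\<integral>T. Phi R T \<partial>L) \<in> U} \<in>
     {{L. (\<integral>T. f T \<partial>L) \<in> U} | f U.
        continuous_on (Qcfg q) f \<and> bounded (f ` Qcfg q) \<and> open (U :: real set)}"
  proof (intro CollectI exI conjI)
    show "continuous_on (Qcfg q) (Phi R)" by (rule continuous_on_subset[OF Phi_cont]) simp
    show "bounded (Phi R ` Qcfg q)" unfolding bounded_iff using Phi_bound by auto
  qed (auto simp: U)
  then have "openin (weak_topology q) {L. (\<integral>T. Phi R T \<partial>L) \<in> U}"
    unfolding weak_topology_def by (rule topology_generated_by_Basis)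
  then have "openin (weak_topology q) (topspace (weak_topology q) \<inter> {L. (\<integral>T. Phi R T \<partial>L) \<in> U})"
    by (intro openin_Int openin_topspace)
  moreover have "{x \<in> topspace (weak_topology q). u x R \<in> U} = topspace (weak_topology q) \<inter> {L. (\<integral>T. Phi R T \<partial>L) \<in> U}"
    unfolding u_def by auto
  ultimately show "openin (weak_topology q) {x \<in> topspace (weak_topology q). u x R \<in> U}" by simp
qed

lemma ulim_cont: "continuous_map (subtopology (weak_topology q) (Sstar q)) euclideanreal (\<lambda>L. lim (u L))"
proof -
  have "continuous_map (subtopology (weak_topology q) (Sstar q)) Met_TC.mtopology (\<lambda>L. lim (u L))"
  proof (rule Met_TC.continuous_map_uniform_limit[where F=sequentially and f="\<lambda>n L. u L n"])
    show "\<forall>\<^sub>F n in sequentially. continuous_map (subtopology (weak_topology q) (Sstar q)) Met_TC.mtopology (\<lambda>L. u L n)"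
      using continuous_map_from_subtopology[OF u_cont_W] by simp
    fix \<epsilon> :: real assume e: "0 < \<epsilon>"
    have "\<forall>\<^sub>F n in sequentially. EE / real n < \<epsilon>"
      using order_tendstoD(2)[OF lim_const_over_n[of EE] e] by simp
    moreover have "\<forall>\<^sub>F n in sequentially. 1 \<le> n" by (rule eventually_ge_at_top)
    ultimately show "\<forall>\<^sub>F n in sequentially. \<forall>x\<in>topspace (subtopology (weak_topology q) (Sstar q)).
        lim (u x) \<in> UNIV \<and> dist (u x n) (lim (u x)) < \<epsilon>"
    proof eventually_elim
      case (elim n)
      show ?case
      proof
        fix x assume "x \<in> topspace (subtopology (weak_topology q) (Sstar q))"
        then have x: "x \<in> Sstar q" by simp
        have "\<bar>lim (u x) - u x n\<bar> \<le> EE / real n" using u_lim[OF x] elim by blast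
        then show "lim (u x) \<in> UNIV \<and> dist (u x n) (lim (u x)) < \<epsilon>"
          using elim by (simp add: dist_real_def abs_minus_commute)
      qed
    qed
  qed simp
  then show ?thesis by simp
qed

end



lemma open_natpair: "open (S :: (nat \<times> nat) set)"
proof -
  have eq: "S = (\<Union>p\<in>S. {fst p} \<times> {snd p})" by auto
  have op: "open ({fst p} \<times> {snd p})" for p :: "nat \<times> nat"
    by (intro open_Times discrete_topology_class.open_discrete)
  show ?thesis by (subst eq) (intro open_UN ballI op)
qed

lemma cont_natpair: "continuous_on UNIV (f :: nat \<times> nat \<Rightarrow> real)"
  by (subst continuous_on_open_vimage[OF open_UNIV]) (simp add: open_natpair)

lemma cont_kdelta2: "continuous_on UNIV (\<lambda>\<tau>::nat\<Rightarrow>nat. kdelta (\<tau> i) (\<tau> j))"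
proof -
  have "continuous_on UNIV (\<lambda>\<tau>::nat\<Rightarrow>nat. (\<tau> i, \<tau> j))"
    by (intro continuous_on_Pair continuous_on_product_coordinates)
  from continuous_on_compose2[OF cont_natpair[of "\<lambda>p. kdelta (fst p) (snd p)"] this]
  show ?thesis by simp
qed

lemma cont_kdelta1: "continuous_on UNIV (\<lambda>\<tau>::nat\<Rightarrow>nat. kdelta (\<tau> i) c)"
  by (rule continuous_on_compose2[OF Topological_Spaces.continuous_on_discrete[of UNIV "\<lambda>x. kdelta x c"]
        continuous_on_product_coordinates]) simp

lemma kdelta_01: "0 \<le> kdelta x y" "kdelta x y \<le> 1"
  by (auto simp: kdelta_def)

lemma poisson_nonneg: "0 \<le> m \<Longrightarrow> 0 \<le> poisson m k"
  by (simp add: poisson_def)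

lemma summable_poisson_pow: "summable (\<lambda>k. poisson m k * x ^ k)"
proof -
  have "(\<lambda>k. poisson m k * x ^ k) = (\<lambda>k. exp (- m) * (inverse (fact k) * (m * x) ^ k))"
    by (rule ext) (simp add: poisson_def power_mult_distrib divide_inverse ac_simps)
  then show ?thesis using summable_mult[OF summable_exp[of "m * x"], of "exp (-m)"] by simp
qed

lemma summable_poisson_lin:
  assumes m: "0 \<le> m"
  shows "summable (\<lambda>k. poisson m k * (\<alpha> + \<gamma> * real k))"
proof -
  have s1: "summable (\<lambda>k. poisson m k * 1 ^ k)" by (rule summable_poisson_pow)
  have s2: "summable (\<lambda>k. poisson m k * 2 ^ k)" by (rule summable_poisson_pow)
  have s3: "summable (\<lambda>k. poisson m k * real k)"
  proof (rule summable_comparison_test[OF _ s2], intro exI allI impI)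
    fix k :: nat
    have "real k \<le> 2 ^ k" using of_nat_less_two_power[of k, where 'a=real] by linarith
    then show "norm (poisson m k * real k) \<le> poisson m k * 2 ^ k"
      using poisson_nonneg[OF m, of k] by (simp add: abs_mult mult_left_mono)
  qed
  have "(\<lambda>k. poisson m k * (\<alpha> + \<gamma> * real k)) = (\<lambda>k. \<alpha> * (poisson m k * 1 ^ k) + \<gamma> * (poisson m k * real k))"
    by (auto simp: algebra_simps)
  then show ?thesis using summable_add[OF summable_mult[OF s1] summable_mult[OF s3]] by simp
qed

lemma summable_poisson_exp:
  shows "summable (\<lambda>k. poisson m k * exp (\<gamma> * real k))"
proof -
  have "(\<lambda>k. poisson m k * exp (\<gamma> * real k)) = (\<lambda>k. poisson m k * exp \<gamma> ^ k)"
  proof (rule ext)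
    fix k
    have "exp (real k * \<gamma>) = exp \<gamma> ^ k" by (rule exp_of_nat_mult)
    then show "poisson m k * exp (\<gamma> * real k) = poisson m k * exp \<gamma> ^ k" by (simp add: mult.commute)
  qed
  then show ?thesis using summable_poisson_pow by simp
qed



lemma exp_sq_inv: fixes x :: real shows "(1 - (exp (- x))\<^sup>2) / (exp (- x))\<^sup>2 \<le> exp (2 * x)" and
      exp_sq_inv_nn: "(x::real) \<ge> 0 \<Longrightarrow> 0 \<le> (1 - (exp (- x))\<^sup>2) / (exp (- x))\<^sup>2"
proof -
  have e: "(exp (- x))\<^sup>2 = exp (- 2 * x)" by (simp add: power2_eq_square exp_add[symmetric])
  have "(1 - (exp (- x))\<^sup>2) / (exp (- x))\<^sup>2 = exp (2 * x) - 1"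
    unfolding e by (simp add: field_simps exp_add[symmetric])
  then show "(1 - (exp (- x))\<^sup>2) / (exp (- x))\<^sup>2 \<le> exp (2 * x)" by simp
  assume "x \<ge> 0"
  then have "1 \<le> exp (2 * x)" by simp
  then show "0 \<le> (1 - (exp (- x))\<^sup>2) / (exp (- x))\<^sup>2"
    using \<open>(1 - (exp (- x))\<^sup>2) / (exp (- x))\<^sup>2 = exp (2 * x) - 1\<close> by simp
qed

lemma G2_main:
  fixes q N :: nat and \<beta> c :: real
  assumes b: "\<beta> \<ge> 0" and c: "c \<ge> 0" and N: "N \<ge> 1"
  shows "(\<forall>L \<in> Sstar q. convergent (\<lambda>R. G2 N R \<beta> c L))
    \<and> continuous_map (subtopology (weak_topology q) (Sstar q)) euclideanreal
        (\<lambda>L. lim (\<lambda>R. G2 N R \<beta> c L))"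
proof -
  define m where "m = c * real N / 2"
  have m: "0 \<le> m" unfolding m_def using c by simp
  define S where "S = (\<lambda>K (\<tau>::nat\<Rightarrow>nat). \<Sum>k<K. kdelta (\<tau> (2 * k)) (\<tau> (2 * k + 1)))"
  have S0: "0 \<le> S K \<tau>" for K \<tau> unfolding S_def by (intro sum_nonneg) (simp add: kdelta_01)
  have S1: "S K \<tau> \<le> real K" for K \<tau>
  proof -
    have "S K \<tau> \<le> (\<Sum>k<K. 1)" unfolding S_def by (intro sum_mono) (simp add: kdelta_01)
    then show ?thesis by simp
  qed
  interpret S2: scheme q "\<lambda>K. {()}" "\<lambda>K. poisson m K / real N"
    "\<lambda>K i \<tau>. exp (- \<beta> * S K \<tau>)" "\<lambda>K. exp (- \<beta> * real K)" "\<lambda>K. 1"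
  proof
    show "0 \<le> poisson m k / real N" for k using poisson_nonneg[OF m] by simp
    show "continuous_on UNIV (\<lambda>\<tau>. exp (- \<beta> * S k \<tau>))" for k
      unfolding S_def by (intro continuous_intros cont_kdelta2)
    show "exp (- \<beta> * real k) \<le> exp (- \<beta> * S k \<tau>)" for k \<tau>
      using S1[of k \<tau>] b by (simp add: mult_left_mono)
    show "exp (- \<beta> * S k \<tau>) \<le> 1" for k \<tau>
      using S0[of k \<tau>] b by simp
    show "summable (\<lambda>k. poisson m k / real N * real (card {()}) * (\<bar>ln (exp (- \<beta> * real k))\<bar> + \<bar>ln 1\<bar>))"
    proof -
      have "(\<lambda>k. poisson m k / real N * real (card {()}) * (\<bar>ln (exp (- \<beta> * real k))\<bar> + \<bar>ln 1\<bar>))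
          = (\<lambda>k. (1 / real N) * (poisson m k * (0 + \<beta> * real k)))"
        using b by (auto simp: abs_mult)
      moreover have "summable (\<lambda>k. poisson m k * (0 + \<beta> * real k))"
        by (rule summable_poisson_lin[OF m])
      ultimately show ?thesis using summable_mult[of "\<lambda>k. poisson m k * (0 + \<beta> * real k)" "1 / real N"] by simp
    qed
    show "summable (\<lambda>k. poisson m k / real N * real (card {()}) * (1\<^sup>2 - (exp (- \<beta> * real k))\<^sup>2) / (exp (- \<beta> * real k))\<^sup>2)"
    proof (rule summable_comparison_test[OF _ summable_mult[OF summable_poisson_exp, of "1 / real N" m "2 * \<beta>"]], intro exI allI impI)
      fix k :: nat
      have p: "0 \<le> poisson m k / real N" using poisson_nonneg[OF m] by simp
      have eq: "poisson m k / real N * real (card {()}) * (1\<^sup>2 - (exp (- \<beta> * real k))\<^sup>2) / (exp (- \<beta> * real k))\<^sup>2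
          = poisson m k / real N * ((1 - (exp (- (\<beta> * real k)))\<^sup>2) / (exp (- (\<beta> * real k)))\<^sup>2)" by simp
      show "norm (poisson m k / real N * real (card {()}) * (1\<^sup>2 - (exp (- \<beta> * real k))\<^sup>2) / (exp (- \<beta> * real k))\<^sup>2)
          \<le> 1 / real N * (poisson m k * exp (2 * \<beta> * real k))"
      proof -
        let ?Q = "(1 - (exp (- (\<beta> * real k)))\<^sup>2) / (exp (- (\<beta> * real k)))\<^sup>2"
        have Q: "0 \<le> ?Q" "?Q \<le> exp (2 * (\<beta> * real k))"
          using exp_sq_inv[of "\<beta> * real k"] exp_sq_inv_nn[of "\<beta> * real k"] b by auto
        have "norm (poisson m k / real N * ?Q) = poisson m k / real N * ?Q"
          using p Q by (simp only: real_norm_def abs_mult abs_of_nonneg)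
        also have "\<dots> \<le> poisson m k / real N * exp (2 * (\<beta> * real k))"
          using p Q by (intro mult_left_mono) auto
        also have "\<dots> = 1 / real N * (poisson m k * exp (2 * \<beta> * real k))"
          by (simp add: mult.assoc)
        finally show ?thesis unfolding eq .
      qed
    qed
  qed simp_all
  have eq: "G2 N R \<beta> c L = S2.u L R" for L R
    unfolding G2_def S2.u_def S2.Phi_def S2.phi_def by (simp add: m_def S_def)
  have eqf: "(\<lambda>R. G2 N R \<beta> c L) = S2.u L" for L using eq by auto
  show ?thesis unfolding eqf using S2.u_lim S2.ulim_cont by blast
qed



lemma G1_main:
  fixes q N :: nat and \<beta> c :: real
  assumes q: "q \<ge> 2" and b: "\<beta> \<ge> 0" and c: "c \<ge> 0" and N: "N \<ge> 1"
  shows "(\<forall>L \<in> Sstar q. convergent (\<lambda>R. G1 q N R \<beta> c L))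
    \<and> continuous_map (subtopology (weak_topology q) (Sstar q)) euclideanreal
        (\<lambda>L. lim (\<lambda>R. G1 q N R \<beta> c L))"
proof -
  define m where "m = c * real N"
  have m: "0 \<le> m" unfolding m_def using c by simp
  define A where "A = (\<lambda>k::nat. PiE {..<k} (\<lambda>_. {1..N}))"
  define \<Sigma> where "\<Sigma> = PiE {1..N} (\<lambda>_. {1..q})"
  define w where "w = (\<lambda>k. poisson m k * (1 / real N ^ k) * (1 / real N))"
  define g where "g = (\<lambda>k I \<tau>. \<Sum>\<sigma>\<in>\<Sigma>. exp (- \<beta> * Hamil k I \<tau> \<sigma>))"
  define Q where "Q = real q ^ N"
  have Q: "1 \<le> Q" unfolding Q_def using q by simp
  have cardA: "card (A k) = N ^ k" for k unfolding A_def by (simp add: card_PiE)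
  have cardS: "real (card \<Sigma>) = Q" unfolding \<Sigma>_def Q_def by (simp add: card_PiE)
  have finS: "finite \<Sigma>" unfolding \<Sigma>_def by (intro finite_PiE) auto
  have wc: "w k * real (card (A k)) = poisson m k / real N" for k
    unfolding w_def cardA using N by (simp add: field_simps)
  have H0: "0 \<le> Hamil k I \<tau> \<sigma>" for k I \<tau> \<sigma>
    unfolding Hamil_def by (intro sum_nonneg) (simp add: kdelta_01)
  have H1: "Hamil k I \<tau> \<sigma> \<le> real k" for k I \<tau> \<sigma>
  proof -
    have "Hamil k I \<tau> \<sigma> \<le> (\<Sum>i<k. 1)" unfolding Hamil_def by (intro sum_mono) (simp add: kdelta_01)
    then show ?thesis by simp
  qed
  have gl: "Q * exp (- \<beta> * real k) \<le> g k I \<tau>" for k I \<tau>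
  proof -
    have "(\<Sum>\<sigma>\<in>\<Sigma>. exp (- \<beta> * real k)) \<le> (\<Sum>\<sigma>\<in>\<Sigma>. exp (- \<beta> * Hamil k I \<tau> \<sigma>))"
      using H1 b by (intro sum_mono) (simp add: mult_left_mono)
    then show ?thesis unfolding g_def using cardS by simp
  qed
  have gu: "g k I \<tau> \<le> Q" for k I \<tau>
  proof -
    have "(\<Sum>\<sigma>\<in>\<Sigma>. exp (- \<beta> * Hamil k I \<tau> \<sigma>)) \<le> (\<Sum>\<sigma>\<in>\<Sigma>. 1)"
      using H0 b by (intro sum_mono) simp
    then show ?thesis unfolding g_def using cardS by simp
  qed
  have lnQ: "0 \<le> ln Q" using Q by simp
  interpret S1: scheme q A w g "\<lambda>k. Q * exp (- \<beta> * real k)" "\<lambda>k. Q"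
  proof
    show "finite (A k)" for k unfolding A_def by (intro finite_PiE) auto
    show "0 \<le> w k" for k unfolding w_def using poisson_nonneg[OF m] by simp
    show "continuous_on UNIV (g k I)" for k I
      unfolding g_def Hamil_def by (intro continuous_intros cont_kdelta1)
    show "0 < Q * exp (- \<beta> * real k)" for k using Q by simp
    show "Q * exp (- \<beta> * real k) \<le> g k I \<tau>" for k I \<tau> by (rule gl)
    show "g k I \<tau> \<le> Q" for k I \<tau> by (rule gu)
    show "summable (\<lambda>k. w k * real (card (A k)) * (\<bar>ln (Q * exp (- \<beta> * real k))\<bar> + \<bar>ln Q\<bar>))"
    proof (rule summable_comparison_test[OF _ summable_mult[OF summable_poisson_lin[OF m, of "2 * ln Q" \<beta>], of "1 / real N"]],
        intro exI allI impI)
      fix k :: nat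
      have p: "0 \<le> poisson m k / real N" using poisson_nonneg[OF m] by simp
      have l: "ln (Q * exp (- \<beta> * real k)) = ln Q - \<beta> * real k" using Q by (simp add: ln_mult)
      have bd: "\<bar>ln (Q * exp (- \<beta> * real k))\<bar> + \<bar>ln Q\<bar> \<le> 2 * ln Q + \<beta> * real k"
        unfolding l using lnQ b by (simp add: abs_le_iff)
      have nn: "0 \<le> \<bar>ln (Q * exp (- \<beta> * real k))\<bar> + \<bar>ln Q\<bar>" by simp
      have "norm (w k * real (card (A k)) * (\<bar>ln (Q * exp (- \<beta> * real k))\<bar> + \<bar>ln Q\<bar>))
          = poisson m k / real N * (\<bar>ln (Q * exp (- \<beta> * real k))\<bar> + \<bar>ln Q\<bar>)"
        unfolding wc using p nn by (simp only: real_norm_def abs_mult abs_of_nonneg)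
      also have "\<dots> \<le> poisson m k / real N * (2 * ln Q + \<beta> * real k)"
        using p bd by (intro mult_left_mono) auto
      also have "\<dots> = 1 / real N * (poisson m k * (2 * ln Q + \<beta> * real k))" by simp
      finally show "norm (w k * real (card (A k)) * (\<bar>ln (Q * exp (- \<beta> * real k))\<bar> + \<bar>ln Q\<bar>))
          \<le> 1 / real N * (poisson m k * (2 * ln Q + \<beta> * real k))" .
    qed
    show "summable (\<lambda>k. w k * real (card (A k)) * (Q\<^sup>2 - (Q * exp (- \<beta> * real k))\<^sup>2) / (Q * exp (- \<beta> * real k))\<^sup>2)"
    proof (rule summable_comparison_test[OF _ summable_mult[OF summable_poisson_exp, of "1 / real N" m "2 * \<beta>"]], intro exI allI impI)
      fix k :: nat
      have p: "0 \<le> poisson m k / real N" using poisson_nonneg[OF m] by simp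
      let ?Q = "(1 - (exp (- (\<beta> * real k)))\<^sup>2) / (exp (- (\<beta> * real k)))\<^sup>2"
      have eq: "w k * real (card (A k)) * (Q\<^sup>2 - (Q * exp (- \<beta> * real k))\<^sup>2) / (Q * exp (- \<beta> * real k))\<^sup>2
          = poisson m k / real N * ?Q"
      proof -
        have n0: "real N \<noteq> 0" "Q \<noteq> 0" "exp (- (\<beta> * real k)) \<noteq> 0" using N Q by auto
        show ?thesis unfolding wc using n0 by (simp add: power_mult_distrib divide_simps) (simp add: algebra_simps)
      qed
      have QQ: "0 \<le> ?Q" "?Q \<le> exp (2 * (\<beta> * real k))"
        using exp_sq_inv[of "\<beta> * real k"] exp_sq_inv_nn[of "\<beta> * real k"] b by auto
      have "norm (poisson m k / real N * ?Q) = poisson m k / real N * ?Q"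
        using p QQ by (simp only: real_norm_def abs_mult abs_of_nonneg)
      also have "\<dots> \<le> poisson m k / real N * exp (2 * (\<beta> * real k))"
        using p QQ by (intro mult_left_mono) auto
      also have "\<dots> = 1 / real N * (poisson m k * exp (2 * \<beta> * real k))"
        by (simp add: mult.assoc)
      finally show "norm (w k * real (card (A k)) * (Q\<^sup>2 - (Q * exp (- \<beta> * real k))\<^sup>2) / (Q * exp (- \<beta> * real k))\<^sup>2)
          \<le> 1 / real N * (poisson m k * exp (2 * \<beta> * real k))" unfolding eq .
    qed
  qed
  have eq: "G1 q N R \<beta> c L = S1.u L R" for L R
  proof -
    have "(\<Sum>k. poisson (c * real N) k * (1 / real N ^ k) *
      (\<Sum>I \<in> PiE {..<k} (\<lambda>_. {1..N}).
         (1 / real N) * ln (\<Sum>r<R. (1 / real R) *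
            (\<Sum>\<sigma> \<in> PiE {1..N} (\<lambda>_. {1..q}). exp (- \<beta> * Hamil k I (T r) \<sigma>))))) = S1.Phi R T" for T
      unfolding S1.Phi_def S1.phi_def
      by (rule suminf_cong) (simp add: A_def w_def g_def \<Sigma>_def m_def sum_distrib_left mult.assoc)
    then show ?thesis unfolding G1_def S1.u_def by simp
  qed
  have eqf: "(\<lambda>R. G1 q N R \<beta> c L) = S1.u L" for L using eq by auto
  show ?thesis unfolding eqf using S1.u_lim S1.ulim_cont by blast
qed


theorem mainTheorem14:
  fixes q N :: nat and \<beta> c :: real
  assumes "q \<ge> 2" and "\<beta> \<ge> 0" and "c \<ge> 0" and "N \<ge> 1"
  shows "(\<forall>L \<in> Sstar q. convergent (\<lambda>R. G1 q N R \<beta> c L) \<and> convergent (\<lambda>R. G2 N R \<beta> c L))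
    \<and> continuous_map (subtopology (weak_topology q) (Sstar q)) euclideanreal
        (\<lambda>L. lim (\<lambda>R. G1 q N R \<beta> c L))
    \<and> continuous_map (subtopology (weak_topology q) (Sstar q)) euclideanreal
        (\<lambda>L. lim (\<lambda>R. G2 N R \<beta> c L))"
  using G1_main[OF assms] G2_main[OF assms(2-4), of q] by blast

end
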